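(* Let $\Lambda\subseteq\mathbb Z^2$ be the lattice with generator matrix $$G=\begin{pmatrix} v_{11} & v_{12}\\ v_{21} & v_{22}\end{pmatrix}.$$ Assume $\Lambda$ induces a lattice tiling of the shape $\mathcal S\subset\mathbb Z^2$. Then the triple $(\Lambda,\mathcal S,\delta)$ defines a folding: <ul> <li>with $\delta=(+1,+1)$ if and only if $\gcd(v_{22}-v_{21},\,v_{11}-v_{12})=1$;</li> <li>with $\delta=(+1,-1)$ if and only if $\gcd(v_{22}+v_{21},\,v_{11}+v_{12})=1$;</li> <li>with $\delta=(+1,0)$ if and only if $\gcd(v_{12},v_{22})=1$;</li> <li>with $\delta=(0,+1)$ if and only if $\gcd(v_{11},v_{21})=1$.</li> </ul>
   Context: Let $D\ge 1$. A shape is a finite nonempty set $\mathcal S\subset\mathbb Z^D$ containing the origin; the origin is its distinguished center point. A lattice is a set $\Lambda=\{\sum_{j=1}^D u_jv_j : u_1,\dots,u_D\in\mathbb Z\}$ for linearly independent $v_1,\dots,v_D\in\mathbb Z^D$. The $D\times D$ matrix $G$ whose rows are $v_1,\dots,v_D$ is a generator matrix of $\Lambda$. $\Lambda$ induces a lattice tiling of $\mathcal S$ if the translates $\mathcal S+\lambda$, $\lambda\in\Lambda$, are pairwise disjoint and cover $\mathbb Z^D$. The translate $\mathcal S+\lambda$ is called the copy of $\mathcal S$ with center $\lambda$. For $x\in\mathbb Z^D$, $c(x)$ denotes the unique $\lambda\in\Lambda$ with $x\in\mathcal S+\lambda$. A ternary vector (direction) is a nonzero $\delta\in\{-1,0,+1\}^D$.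 The folded-row of $(\Lambda,\mathcal S,\delta)$ is the sequence $p_0,p_1,p_2,\dots$ defined by $p_0=0$ and $p_{k+1}=(p_k+\delta)-c(p_k+\delta)$. Equivalently, $p_{k+1}=p_k+\delta$ if $p_k+\delta\in\mathcal S$; otherwise $p_{k+1}$ is $p_k+\delta$ minus the center of the copy of $\mathcal S$ containing $p_k+\delta$. The triple $(\Lambda,\mathcal S,\delta)$ defines a folding if every element of $\mathcal S$ occurs in its folded-row. *)

theory Defs
  imports Main
begin

type_synonym pt = "int \<times> int"

definition padd :: "pt \<Rightarrow> pt \<Rightarrow> pt" where
  "padd x y = (fst x + fst y, snd x + snd y)"

definition psub :: "pt \<Rightarrow> pt \<Rightarrow> pt" where
  "psub x y = (fst x - fst y, snd x - snd y)"

definition is_shape :: "pt set \<Rightarrow> bool" where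
  "is_shape S \<longleftrightarrow> finite S \<and> S \<noteq> {} \<and> (0, 0) \<in> S"

text \<open>Lattice with generator matrix whose rows are v1 and v2.\<close>
definition lattice2 :: "pt \<Rightarrow> pt \<Rightarrow> pt set" where
  "lattice2 v1 v2 = {(u1 * fst v1 + u2 * fst v2, u1 * snd v1 + u2 * snd v2) | u1 u2 :: int. True}"

definition lin_indep2 :: "pt \<Rightarrow> pt \<Rightarrow> bool" where
  "lin_indep2 v1 v2 \<longleftrightarrow> fst v1 * snd v2 - snd v1 * fst v2 \<noteq> 0"

definition translate :: "pt set \<Rightarrow> pt \<Rightarrow> pt set" where
  "translate S l = (\<lambda>s. padd s l) ` S"

definition lattice_tiling :: "pt set \<Rightarrow> pt set \<Rightarrow> bool" where
  "lattice_tiling L S \<longleftrightarrow>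
     (\<forall>l\<in>L. \<forall>m\<in>L. l \<noteq> m \<longrightarrow> translate S l \<inter> translate S m = {}) \<and>
     (\<Union>l\<in>L. translate S l) = UNIV"

definition center :: "pt set \<Rightarrow> pt set \<Rightarrow> pt \<Rightarrow> pt" where
  "center L S x = (THE l. l \<in> L \<and> x \<in> translate S l)"

primrec folded_row :: "pt set \<Rightarrow> pt set \<Rightarrow> pt \<Rightarrow> nat \<Rightarrow> pt" where
  "folded_row L S d 0 = (0, 0)"
| "folded_row L S d (Suc k) =
     psub (padd (folded_row L S d k) d) (center L S (padd (folded_row L S d k) d))"

definition defines_folding :: "pt set \<Rightarrow> pt set \<Rightarrow> pt \<Rightarrow> bool" where
  "defines_folding L S d \<longleftrightarrow> S \<subseteq> range (folded_row L S d)"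

end

theory Submission
  imports Defs
begin

lemma mem_L:
  "p \<in> lattice2 (v11,v12) (v21,v22) \<longleftrightarrow>
   (\<exists>u1 u2. fst p = u1*v11+u2*v21 \<and> snd p = u1*v12+u2*v22)"
  by (cases p) (auto simp: lattice2_def)

lemma L_add: "p \<in> lattice2 (v11,v12) (v21,v22) \<Longrightarrow> q \<in> lattice2 (v11,v12) (v21,v22)
  \<Longrightarrow> (fst p + fst q, snd p + snd q) \<in> lattice2 (v11,v12) (v21,v22)"
proof -
  assume "p \<in> lattice2 (v11,v12) (v21,v22)" "q \<in> lattice2 (v11,v12) (v21,v22)"
  then obtain u1 u2 w1 w2 where "fst p = u1*v11+u2*v21" "snd p = u1*v12+u2*v22"
     "fst q = w1*v11+w2*v21" "snd q = w1*v12+w2*v22" unfolding mem_L by blast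
  then show ?thesis unfolding mem_L
    by (intro exI[of _ "u1+w1"] exI[of _ "u2+w2"]) (simp add: algebra_simps)
qed

lemma L_smul: "p \<in> lattice2 (v11,v12) (v21,v22)
  \<Longrightarrow> (m * fst p, m * snd p) \<in> lattice2 (v11,v12) (v21,v22)"
proof -
  assume "p \<in> lattice2 (v11,v12) (v21,v22)"
  then obtain u1 u2 where "fst p = u1*v11+u2*v21" "snd p = u1*v12+u2*v22" unfolding mem_L by blast
  then show ?thesis unfolding mem_L
    by (intro exI[of _ "m*u1"] exI[of _ "m*u2"]) (simp add: algebra_simps)
qed

lemma L_det: "((v11*v22 - v12*v21) * x, (v11*v22 - v12*v21) * y) \<in> lattice2 (v11,v12) (v21,v22)"
  unfolding mem_L
  by (rule exI[of _ "x*v22 - y*v21"], rule exI[of _ "y*v11 - x*v12"]) (simp add: algebra_simps)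

lemma mem_translate: "x \<in> translate S l \<longleftrightarrow> psub x l \<in> S"
proof
  assume "x \<in> translate S l"
  then obtain s where "s \<in> S" "x = padd s l" by (auto simp: translate_def)
  then show "psub x l \<in> S" by (cases s, cases l) (simp add: padd_def psub_def)
next
  assume "psub x l \<in> S"
  moreover have "x = padd (psub x l) l" by (cases x, cases l) (simp add: padd_def psub_def)
  ultimately show "x \<in> translate S l" unfolding translate_def by blast
qed

lemma tl_disj: "lattice_tiling L S \<Longrightarrow> a \<in> L \<Longrightarrow> b \<in> L \<Longrightarrow> a \<noteq> b \<Longrightarrow> translate S a \<inter> translate S b = {}"
  unfolding lattice_tiling_def by (elim conjE) (drule bspec, assumption, drule bspec, assumption, erule mp, assumption)
lemma tl_cov: "lattice_tiling L S \<Longrightarrow> \<exists>l\<in>L. x \<in> translate S l"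
  unfolding lattice_tiling_def
proof (elim conjE)
  assume "(\<Union>l\<in>L. translate S l) = UNIV"
  then have "x \<in> (\<Union>l\<in>L. translate S l)" by (simp only: UNIV_I)
  then show "\<exists>l\<in>L. x \<in> translate S l" by (rule UN_E) (rule bexI)
qed

lemma center_props:
  assumes tl: "lattice_tiling L S"
  shows "center L S x \<in> L \<and> psub x (center L S x) \<in> S"
proof -
  obtain l where l: "l \<in> L" "x \<in> translate S l" using tl_cov[OF tl] by blast
  have uniq: "m = l" if m: "m \<in> L \<and> x \<in> translate S m" for m
  proof (rule ccontr)
    assume ne: "m \<noteq> l"
    have "translate S m \<inter> translate S l = {}" using tl_disj[OF tl _ l(1) ne] m by blast
    then show False using m l(2) by blast
  qed
  have "center L S x = l" unfolding center_def
    by (rule the_equality) (use l uniq in blast)+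
  then show ?thesis using l by (simp add: mem_translate)
qed

lemma S_uniq:
  assumes tl: "lattice_tiling L S" and L0: "(0,0) \<in> L" and s: "s \<in> S" and t: "t \<in> S"
    and st: "psub s t \<in> L"
  shows "s = t"
proof (rule ccontr)
  assume ne: "s \<noteq> t"
  have n0: "(0,0) \<noteq> psub s t" using ne by (cases s, cases t) (simp add: psub_def)
  have a: "s \<in> translate S (0,0)" using s by (simp add: mem_translate psub_def)
  have b: "s \<in> translate S (psub s t)" using t
    by (cases s, cases t) (simp add: mem_translate psub_def)
  have "translate S (0,0) \<inter> translate S (psub s t) = {}" by (rule tl_disj[OF tl L0 st n0])
  then show False using a b by blast
qed

lemma fr_inv:
  assumes tl: "lattice_tiling L S" and S0: "(0,0) \<in> S" and L0: "(0,0) \<in> L"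
    and Ladd: "\<And>p q. p \<in> L \<Longrightarrow> q \<in> L \<Longrightarrow> (fst p + fst q, snd p + snd q) \<in> L"
    and Lsm: "\<And>p m. p \<in> L \<Longrightarrow> (m * fst p, m * snd p) \<in> L"
  shows "folded_row L S d k \<in> S \<and>
    (fst (folded_row L S d k) - int k * fst d, snd (folded_row L S d k) - int k * snd d) \<in> L"
proof (induction k)
  case 0
  then show ?case using S0 L0 by simp
next
  case (Suc k)
  define p where "p = folded_row L S d k"
  define c where "c = center L S (padd p d)"
  have c: "c \<in> L" "psub (padd p d) c \<in> S" using center_props[OF tl] c_def by auto
  have "(-1 * fst c, -1 * snd c) \<in> L" using c(1) by (rule Lsm)
  from Ladd[OF Suc.IH[folded p_def, THEN conjunct2] this]
  have "(fst (psub (padd p d) c) - int (Suc k) * fst d, snd (psub (padd p d) c) - int (Suc k) * snd d) \<in> L"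
    by (simp add: psub_def padd_def algebra_simps)
  then show ?case using c by (simp add: p_def c_def)
qed

lemma folding_iff:
  assumes tl: "lattice_tiling L S" and S0: "(0,0) \<in> S" and L0: "(0,0) \<in> L"
    and Ladd: "\<And>p q. p \<in> L \<Longrightarrow> q \<in> L \<Longrightarrow> (fst p + fst q, snd p + snd q) \<in> L"
    and Lsm: "\<And>p m. p \<in> L \<Longrightarrow> (m * fst p, m * snd p) \<in> L"
    and Dpos: "(D::int) > 0" and DL: "\<And>m. (D * m * fst d, D * m * snd d) \<in> L"
  shows "defines_folding L S d \<longleftrightarrow> (\<forall>x. \<exists>k::int. (fst x - k * fst d, snd x - k * snd d) \<in> L)"
proof
  note FR = fr_inv[OF tl S0 L0 Ladd Lsm]
  assume df: "defines_folding L S d"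
  show "\<forall>x. \<exists>k::int. (fst x - k * fst d, snd x - k * snd d) \<in> L"
  proof
    fix x :: pt
    have cp: "center L S x \<in> L" "psub x (center L S x) \<in> S" using center_props[OF tl] by auto
    then obtain n where n: "psub x (center L S x) = folded_row L S d n"
      using df unfolding defines_folding_def by blast
    have "(fst (folded_row L S d n) - int n * fst d, snd (folded_row L S d n) - int n * snd d) \<in> L"
      using FR by blast
    from Ladd[OF this cp(1)]
    have "(fst x - int n * fst d, snd x - int n * snd d) \<in> L"
      using n[symmetric] by (simp add: psub_def algebra_simps)
    then show "\<exists>k::int. (fst x - k * fst d, snd x - k * snd d) \<in> L" by blast
  qed
next
  note FR = fr_inv[OF tl S0 L0 Ladd Lsm]
  assume H: "\<forall>x. \<exists>k::int. (fst x - k * fst d, snd x - k * snd d) \<in> L"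
  show "defines_folding L S d" unfolding defines_folding_def
  proof
    fix s assume s: "s \<in> S"
    obtain k where k: "(fst s - k * fst d, snd s - k * snd d) \<in> L" using H by blast
    define n where "n = nat (k mod D)"
    have nk: "int n = k - D * (k div D)" using Dpos unfolding n_def
      using div_mult_mod_eq[of k D] by (simp add: algebra_simps)
    from Ladd[OF k DL[of "k div D"]]
    have sn: "(fst s - int n * fst d, snd s - int n * snd d) \<in> L"
      unfolding nk by (simp add: algebra_simps)
    define q where "q = folded_row L S d n"
    have fr: "q \<in> S" "(fst q - int n * fst d, snd q - int n * snd d) \<in> L"
      using FR unfolding q_def by blast+
    have "(-1 * (fst q - int n * fst d), -1 * (snd q - int n * snd d)) \<in> L"
      using Lsm[OF fr(2), of "-1"] by simp
    from Ladd[OF sn this]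
    have "psub s q \<in> L" by (simp add: psub_def algebra_simps)
    then have "s = q" using S_uniq[OF tl L0 s fr(1)] by blast
    then show "s \<in> range (folded_row L S d)" unfolding q_def by blast
  qed
qed

lemma bez_iff: "(\<forall>n::int. \<exists>u1 u2. n = u1*a + u2*b) \<longleftrightarrow> gcd a b = 1"
proof
  assume "\<forall>n::int. \<exists>u1 u2. n = u1*a + u2*b"
  then obtain u1 u2 where e: "1 = u1*a + u2*b" by blast
  have "gcd a b dvd u1*a" by simp
  moreover have "gcd a b dvd u2*b" by simp
  ultimately have "gcd a b dvd u1*a + u2*b" by (rule dvd_add)
  then have "gcd a b dvd 1" by (simp only: e[symmetric])
  then show "gcd a b = 1" by simp
next
  assume g: "gcd a b = 1"
  obtain x y where "x*a + y*b = gcd a b" using bezout_int by blast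
  then have xy: "x*a + y*b = 1" using g by simp
  show "\<forall>n::int. \<exists>u1 u2. n = u1*a + u2*b"
  proof
    fix n :: int
    have "n = n * (x*a + y*b)" using xy by simp
    also have "\<dots> = (n*x)*a + (n*y)*b" by (simp add: algebra_simps)
    finally show "\<exists>u1 u2. n = u1*a + u2*b" by blast
  qed
qed

lemma dir11: "(\<forall>x. \<exists>k::int. (fst x - k * fst (1::int,1::int), snd x - k * snd (1::int,1::int)) \<in> lattice2 (v11,v12) (v21,v22))
   \<longleftrightarrow> (\<forall>n::int. \<exists>u1 u2. n = u1*(v11-v12) + u2*(v21-v22))"
proof
  assume H: "\<forall>x. \<exists>k::int. (fst x - k * fst (1::int,1::int), snd x - k * snd (1::int,1::int)) \<in> lattice2 (v11,v12) (v21,v22)"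
  show "\<forall>n::int. \<exists>u1 u2. n = u1*(v11-v12) + u2*(v21-v22)"
  proof
    fix n :: int
    obtain k where "(fst (n,0::int) - k * fst (1::int,1::int), snd (n,0::int) - k * snd (1::int,1::int)) \<in> lattice2 (v11,v12) (v21,v22)"
      using H by blast
    then obtain u1 u2 where e: "fst (n,0::int) - k * fst (1::int,1::int) = u1*v11+u2*v21"
        "snd (n,0::int) - k * snd (1::int,1::int) = u1*v12+u2*v22"
      unfolding mem_L by auto
    have "n = u1*(v11-v12) + u2*(v21-v22)" using e by (simp add: algebra_simps; linarith)
    then show "\<exists>u1 u2. n = u1*(v11-v12) + u2*(v21-v22)" by blast
  qed
next
  assume H: "\<forall>n::int. \<exists>u1 u2. n = u1*(v11-v12) + u2*(v21-v22)"
  show "\<forall>x. \<exists>k::int. (fst x - k * fst (1::int,1::int), snd x - k * snd (1::int,1::int)) \<in> lattice2 (v11,v12) (v21,v22)"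
  proof
    fix x :: pt
    obtain u1 u2 where e: "fst x - snd x = u1*(v11-v12) + u2*(v21-v22)" using H by blast
    have "(fst x - (fst x - u1*v11 - u2*v21) * fst (1::int,1::int), snd x - (fst x - u1*v11 - u2*v21) * snd (1::int,1::int)) \<in> lattice2 (v11,v12) (v21,v22)"
      unfolding mem_L by (intro exI[of _ u1] exI[of _ u2]) (use e in \<open>simp add: algebra_simps; linarith\<close>)
    then show "\<exists>k::int. (fst x - k * fst (1::int,1::int), snd x - k * snd (1::int,1::int)) \<in> lattice2 (v11,v12) (v21,v22)" by blast
  qed
qed

lemma dir1m: "(\<forall>x. \<exists>k::int. (fst x - k * fst (1::int,-1::int), snd x - k * snd (1::int,-1::int)) \<in> lattice2 (v11,v12) (v21,v22))
   \<longleftrightarrow> (\<forall>n::int. \<exists>u1 u2. n = u1*(v11+v12) + u2*(v21+v22))"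
proof
  assume H: "\<forall>x. \<exists>k::int. (fst x - k * fst (1::int,-1::int), snd x - k * snd (1::int,-1::int)) \<in> lattice2 (v11,v12) (v21,v22)"
  show "\<forall>n::int. \<exists>u1 u2. n = u1*(v11+v12) + u2*(v21+v22)"
  proof
    fix n :: int
    obtain k where "(fst (n,0::int) - k * fst (1::int,-1::int), snd (n,0::int) - k * snd (1::int,-1::int)) \<in> lattice2 (v11,v12) (v21,v22)"
      using H by blast
    then obtain u1 u2 where e: "fst (n,0::int) - k * fst (1::int,-1::int) = u1*v11+u2*v21"
        "snd (n,0::int) - k * snd (1::int,-1::int) = u1*v12+u2*v22"
      unfolding mem_L by auto
    have "n = u1*(v11+v12) + u2*(v21+v22)" using e by (simp add: algebra_simps; linarith)
    then show "\<exists>u1 u2. n = u1*(v11+v12) + u2*(v21+v22)" by blast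
  qed
next
  assume H: "\<forall>n::int. \<exists>u1 u2. n = u1*(v11+v12) + u2*(v21+v22)"
  show "\<forall>x. \<exists>k::int. (fst x - k * fst (1::int,-1::int), snd x - k * snd (1::int,-1::int)) \<in> lattice2 (v11,v12) (v21,v22)"
  proof
    fix x :: pt
    obtain u1 u2 where e: "fst x + snd x = u1*(v11+v12) + u2*(v21+v22)" using H by blast
    have "(fst x - (fst x - u1*v11 - u2*v21) * fst (1::int,-1::int), snd x - (fst x - u1*v11 - u2*v21) * snd (1::int,-1::int)) \<in> lattice2 (v11,v12) (v21,v22)"
      unfolding mem_L by (intro exI[of _ u1] exI[of _ u2]) (use e in \<open>simp add: algebra_simps; linarith\<close>)
    then show "\<exists>k::int. (fst x - k * fst (1::int,-1::int), snd x - k * snd (1::int,-1::int)) \<in> lattice2 (v11,v12) (v21,v22)" by blast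
  qed
qed

lemma dir10: "(\<forall>x. \<exists>k::int. (fst x - k * fst (1::int,0::int), snd x - k * snd (1::int,0::int)) \<in> lattice2 (v11,v12) (v21,v22))
   \<longleftrightarrow> (\<forall>n::int. \<exists>u1 u2. n = u1*(v12) + u2*(v22))"
proof
  assume H: "\<forall>x. \<exists>k::int. (fst x - k * fst (1::int,0::int), snd x - k * snd (1::int,0::int)) \<in> lattice2 (v11,v12) (v21,v22)"
  show "\<forall>n::int. \<exists>u1 u2. n = u1*(v12) + u2*(v22)"
  proof
    fix n :: int
    obtain k where "(fst (0::int,n) - k * fst (1::int,0::int), snd (0::int,n) - k * snd (1::int,0::int)) \<in> lattice2 (v11,v12) (v21,v22)"
      using H by blast
    then obtain u1 u2 where e: "fst (0::int,n) - k * fst (1::int,0::int) = u1*v11+u2*v21"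
        "snd (0::int,n) - k * snd (1::int,0::int) = u1*v12+u2*v22"
      unfolding mem_L by auto
    have "n = u1*(v12) + u2*(v22)" using e by (simp add: algebra_simps; linarith)
    then show "\<exists>u1 u2. n = u1*(v12) + u2*(v22)" by blast
  qed
next
  assume H: "\<forall>n::int. \<exists>u1 u2. n = u1*(v12) + u2*(v22)"
  show "\<forall>x. \<exists>k::int. (fst x - k * fst (1::int,0::int), snd x - k * snd (1::int,0::int)) \<in> lattice2 (v11,v12) (v21,v22)"
  proof
    fix x :: pt
    obtain u1 u2 where e: "snd x = u1*(v12) + u2*(v22)" using H by blast
    have "(fst x - (fst x - u1*v11 - u2*v21) * fst (1::int,0::int), snd x - (fst x - u1*v11 - u2*v21) * snd (1::int,0::int)) \<in> lattice2 (v11,v12) (v21,v22)"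
      unfolding mem_L by (intro exI[of _ u1] exI[of _ u2]) (use e in \<open>simp add: algebra_simps; linarith\<close>)
    then show "\<exists>k::int. (fst x - k * fst (1::int,0::int), snd x - k * snd (1::int,0::int)) \<in> lattice2 (v11,v12) (v21,v22)" by blast
  qed
qed

lemma dir01: "(\<forall>x. \<exists>k::int. (fst x - k * fst (0::int,1::int), snd x - k * snd (0::int,1::int)) \<in> lattice2 (v11,v12) (v21,v22))
   \<longleftrightarrow> (\<forall>n::int. \<exists>u1 u2. n = u1*(v11) + u2*(v21))"
proof
  assume H: "\<forall>x. \<exists>k::int. (fst x - k * fst (0::int,1::int), snd x - k * snd (0::int,1::int)) \<in> lattice2 (v11,v12) (v21,v22)"
  show "\<forall>n::int. \<exists>u1 u2. n = u1*(v11) + u2*(v21)"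
  proof
    fix n :: int
    obtain k where "(fst (n,0::int) - k * fst (0::int,1::int), snd (n,0::int) - k * snd (0::int,1::int)) \<in> lattice2 (v11,v12) (v21,v22)"
      using H by blast
    then obtain u1 u2 where e: "fst (n,0::int) - k * fst (0::int,1::int) = u1*v11+u2*v21"
        "snd (n,0::int) - k * snd (0::int,1::int) = u1*v12+u2*v22"
      unfolding mem_L by auto
    have "n = u1*(v11) + u2*(v21)" using e by (simp add: algebra_simps; linarith)
    then show "\<exists>u1 u2. n = u1*(v11) + u2*(v21)" by blast
  qed
next
  assume H: "\<forall>n::int. \<exists>u1 u2. n = u1*(v11) + u2*(v21)"
  show "\<forall>x. \<exists>k::int. (fst x - k * fst (0::int,1::int), snd x - k * snd (0::int,1::int)) \<in> lattice2 (v11,v12) (v21,v22)"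
  proof
    fix x :: pt
    obtain u1 u2 where e: "fst x = u1*(v11) + u2*(v21)" using H by blast
    have "(fst x - (snd x - u1*v12 - u2*v22) * fst (0::int,1::int), snd x - (snd x - u1*v12 - u2*v22) * snd (0::int,1::int)) \<in> lattice2 (v11,v12) (v21,v22)"
      unfolding mem_L by (intro exI[of _ u1] exI[of _ u2]) (use e in \<open>simp add: algebra_simps; linarith\<close>)
    then show "\<exists>k::int. (fst x - k * fst (0::int,1::int), snd x - k * snd (0::int,1::int)) \<in> lattice2 (v11,v12) (v21,v22)" by blast
  qed
qed

lemma g1: "gcd (v22 - v21) (v11 - v12) = gcd (v11 - v12) (v21 - (v22::int))"
proof -
  have "gcd (v22 - v21) (v11 - v12) = gcd (-(v21 - v22)) (v11 - v12)" by simp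
  also have "\<dots> = gcd (v21 - v22) (v11 - v12)" by (rule gcd_neg1)
  finally show ?thesis by (simp add: gcd.commute)
qed
lemma g2: "gcd (v22 + v21) (v11 + v12) = gcd (v11 + v12) (v21 + (v22::int))"
  by (simp add: gcd.commute add.commute)

theorem mainTheorem4:
  fixes v11 v12 v21 v22 :: int and S :: "pt set"
  assumes "lin_indep2 (v11, v12) (v21, v22)"
    and "is_shape S"
    and "lattice_tiling (lattice2 (v11, v12) (v21, v22)) S"
  shows "(defines_folding (lattice2 (v11, v12) (v21, v22)) S (1, 1)
            \<longleftrightarrow> gcd (v22 - v21) (v11 - v12) = 1)
       \<and> (defines_folding (lattice2 (v11, v12) (v21, v22)) S (1, -1)
            \<longleftrightarrow> gcd (v22 + v21) (v11 + v12) = 1)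
       \<and> (defines_folding (lattice2 (v11, v12) (v21, v22)) S (1, 0)
            \<longleftrightarrow> gcd v12 v22 = 1)
       \<and> (defines_folding (lattice2 (v11, v12) (v21, v22)) S (0, 1)
            \<longleftrightarrow> gcd v11 v21 = 1)"
proof -
  let ?L = "lattice2 (v11, v12) (v21, v22)"
  have S0: "(0,0) \<in> S" using assms(2) by (simp add: is_shape_def)
  have L0: "(0,0) \<in> ?L" unfolding mem_L by (intro exI[of _ 0]) simp
  have Ladd: "\<And>p q. p \<in> ?L \<Longrightarrow> q \<in> ?L \<Longrightarrow> (fst p + fst q, snd p + snd q) \<in> ?L"
    by (rule L_add)
  have Lsm: "\<And>p m. p \<in> ?L \<Longrightarrow> (m * fst p, m * snd p) \<in> ?L" by (rule L_smul)
  define det where "det = v11*v22 - v12*v21"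
  have detnz: "det \<noteq> 0" using assms(1) by (simp add: lin_indep2_def det_def)
  define D where "D = \<bar>det\<bar>"
  have Dpos: "D > 0" using detnz D_def by simp
  have DL: "(D * m * fst d, D * m * snd d) \<in> ?L" for m d
  proof -
    have "(sgn det * m * (det * fst d), sgn det * m * (det * snd d)) \<in> ?L"
      using L_smul[OF L_det[of v11 v22 v12 v21 "fst d" "snd d"], of "sgn det * m"]
      unfolding det_def by simp
    moreover have "sgn det * m * (det * z) = D * m * z" for z
      unfolding D_def by (simp add: abs_sgn algebra_simps)
    ultimately show ?thesis by simp
  qed
  note FI = folding_iff[OF assms(3) S0 L0 Ladd Lsm Dpos DL]
  have e11: "defines_folding ?L S (1,1) \<longleftrightarrow> gcd (v22 - v21) (v11 - v12) = 1"
    using trans[OF trans[OF FI[where d="(1,1)"] dir11] bez_iff[of "v11 - v12" "v21 - v22"]] g1 by simp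
  have e1m: "defines_folding ?L S (1,-1) \<longleftrightarrow> gcd (v22 + v21) (v11 + v12) = 1"
    using trans[OF trans[OF FI[where d="(1,-1)"] dir1m] bez_iff[of "v11 + v12" "v21 + v22"]] g2 by simp
  have e10: "defines_folding ?L S (1,0) \<longleftrightarrow> gcd v12 v22 = 1"
    using trans[OF trans[OF FI[where d="(1,0)"] dir10] bez_iff[of "v12" "v22"]] by simp
  have e01: "defines_folding ?L S (0,1) \<longleftrightarrow> gcd v11 v21 = 1"
    using trans[OF trans[OF FI[where d="(0,1)"] dir01] bez_iff[of "v11" "v21"]] by simp
  show ?thesis using e11 e1m e10 e01 by blast
qed

end
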